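(* Let $W\in\mathbb{R}^{a\times b}$ with columns $w_1,\dots,w_b$, and let $\sigma:\mathbb{R}\to\mathbb{R}$ be positive-homogeneous ($\sigma(\alpha t)=\alpha\sigma(t)$ for all $\alpha\ge0$, $t\in\mathbb{R}$) and not identically zero. Let $z\sim\mathcal N(0,I_a)$. For each neuron $j$ define the activity score \[ s_j=\frac{\mathbb{E}_z[|\sigma(\langle z,w_j\rangle)|]}{\frac1b\sum_{k=1}^b\mathbb{E}_z[|\sigma(\langle z,w_k\rangle)|]}. \] If $\varepsilon:=\sqrt{\mathrm{DfI}(W)}<1$, then for all $j$, \[ \sqrt{\frac{1-\varepsilon}{1+\varepsilon}}\le s_j\le\sqrt{\frac{1+\varepsilon}{1-\varepsilon}}. \]
   Context: $\mathrm{DfI}(W)=\|W^\top W-I\|_F^2$ (Deviation from Isometry), with $\|\cdot\|_F$ the Frobenius norm. *)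

theory Defs
  imports "HOL-Probability.Probability"
begin

definition std_gaussian :: "(real ^ 'a) measure" where
  "std_gaussian = density lborel (\<lambda>z. ennreal (\<Prod>i\<in>UNIV. std_normal_density (z $ i)))"

definition frob_norm :: "real ^ 'b ^ 'a \<Rightarrow> real" where
  "frob_norm M = sqrt (\<Sum>i\<in>UNIV. \<Sum>j\<in>UNIV. (M $ i $ j)\<^sup>2)"

definition DfI :: "real ^ 'b ^ 'a \<Rightarrow> real" where
  "DfI W = (frob_norm (transpose W ** W - mat 1))\<^sup>2"

definition exp_act :: "(real \<Rightarrow> real) \<Rightarrow> real ^ 'b ^ 'a \<Rightarrow> 'b \<Rightarrow> real" where
  "exp_act \<sigma> W j = (\<integral>z. \<bar>\<sigma> (z \<bullet> column j W)\<bar> \<partial>std_gaussian)"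

definition activity_score :: "(real \<Rightarrow> real) \<Rightarrow> real ^ 'b ^ 'a \<Rightarrow> 'b \<Rightarrow> real" where
  "activity_score \<sigma> W j =
     exp_act \<sigma> W j / ((1 / real CARD('b)) * (\<Sum>k\<in>UNIV. exp_act \<sigma> W k))"

end

theory Submission
  imports Defs
begin

lemma measurable_vl:
  "(\<lambda>x. \<chi> i. x i) \<in> measurable (PiM (UNIV::'a::finite set) (\<lambda>_. M)) (borel :: (real^'a) measure)"
  if "sets M = sets borel"
proof -
  have *: "(\<lambda>x. (\<chi> i. x i) \<bullet> b) \<in> borel_measurable (PiM (UNIV::'a set) (\<lambda>_. M))" if "b \<in> Basis" for b
  proof -
    from that obtain j where b: "b = axis j 1" by (auto simp: Basis_vec_def)
    have "(\<lambda>x. x j) \<in> borel_measurable (PiM (UNIV::'a set) (\<lambda>_. M))"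
    proof -
      have "(\<lambda>x. x j) \<in> measurable (PiM (UNIV::'a set) (\<lambda>_. M)) M"
        by (rule measurable_component_singleton) simp
      then show ?thesis using measurable_cong_sets[OF refl \<open>sets M = sets borel\<close>, of "PiM (UNIV::'a set) (\<lambda>_. M)"]
        by simp
    qed
    then show ?thesis by (simp add: b inner_axis)
  qed
  show ?thesis
    apply (rule borel_measurable_euclidean_space[where f="\<lambda>x. \<chi> i. x i", THEN iffD2])
    using * by blast
qed

lemma mvl_lborel:
  "(\<lambda>x. \<chi> i. x i) \<in> measurable (PiM (UNIV::'a::finite set) (\<lambda>_. lborel)) (borel :: (real^'a) measure)"
  by (rule measurable_vl) simp

lemma lborel_vec:
  "(lborel :: (real^'a::finite) measure) = distr (PiM UNIV (\<lambda>_. lborel)) borel (\<lambda>x. \<chi> i. x i)"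
proof (rule lborel_eqI)
  fix l u :: "real^'a" assume le: "\<And>b. b \<in> Basis \<Longrightarrow> l \<bullet> b \<le> u \<bullet> b"
  then have le': "l $ i \<le> u $ i" for i using le[of "axis i 1"] by (auto simp: Basis_vec_def inner_axis)
  interpret product_sigma_finite "\<lambda>_::'a. lborel" by standard
  have pre: "(\<lambda>x. \<chi> i. x i) -` box l u \<inter> space (PiM UNIV (\<lambda>_::'a. lborel)) = PiE UNIV (\<lambda>i. {l$i<..<u$i})"
    by (auto simp: mem_box_cart space_PiM PiE_def extensional_def Pi_iff)
  have "emeasure (distr (PiM UNIV (\<lambda>_. lborel)) borel (\<lambda>x. \<chi> i. x i)) (box l u)
     = emeasure (PiM UNIV (\<lambda>_::'a. lborel)) (PiE UNIV (\<lambda>i. {l$i<..<u$i}))"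
    by (subst emeasure_distr[OF mvl_lborel]) (auto simp: pre)
  also have "\<dots> = (\<Prod>i\<in>UNIV. ennreal (u$i - l$i))"
    by (subst emeasure_PiM) (auto simp: le')
  also have "\<dots> = ennreal (\<Prod>i\<in>UNIV. (u$i - l$i))"
    by (simp add: prod_ennreal le')
  also have "(\<Prod>i\<in>UNIV. (u$i - l$i)) = (\<Prod>b\<in>Basis. (u - l) \<bullet> b)"
  proof -
    have BB: "(Basis :: (real^'a) set) = (\<lambda>i. axis i 1) ` UNIV" by (auto simp: Basis_vec_def)
    have "(\<Prod>b\<in>Basis. (u - l) \<bullet> b) = (\<Prod>b\<in>(\<lambda>i. axis i 1) ` UNIV. (u - l) \<bullet> b)"
      by (simp only: BB)
    also have "\<dots> = (\<Prod>i\<in>UNIV. (u - l) \<bullet> axis i 1)"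
      by (subst prod.reindex) (auto simp: inj_on_def axis_eq_axis)
    finally show ?thesis by (simp add: inner_axis)
  qed
  finally show "emeasure (distr (PiM UNIV (\<lambda>_. lborel)) borel (\<lambda>x. \<chi> i. x i)) (box l u) = (\<Prod>b\<in>Basis. (u - l) \<bullet> b)" .
qed simp


abbreviation "NN \<equiv> density lborel (\<lambda>x. ennreal (std_normal_density x))"

lemma prob_NN: "prob_space NN"
  by (rule prob_space_normal_density) simp

lemma density_PiM_NN:
  "density (PiM (UNIV::'a::finite set) (\<lambda>_. lborel)) (\<lambda>x. \<Prod>i\<in>UNIV. ennreal (std_normal_density (x i)))
   = PiM UNIV (\<lambda>_. NN)"
proof -
  interpret N: prob_space NN by (rule prob_NN)
  interpret PN: product_sigma_finite "\<lambda>_::'a. NN" by standard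
  interpret PL: product_sigma_finite "\<lambda>_::'a. lborel" by standard
  show ?thesis
  proof (rule PN.PiM_eqI)
    show "finite (UNIV :: 'a set)" by simp
    show "sets (density (PiM (UNIV::'a set) (\<lambda>_. lborel)) (\<lambda>x. \<Prod>i\<in>UNIV. ennreal (std_normal_density (x i))))
       = sets (PiM UNIV (\<lambda>_. NN))"
      by (simp only: sets_density) (rule sets_PiM_cong; simp)
    fix A :: "'a \<Rightarrow> real set" assume A: "\<And>i. i \<in> UNIV \<Longrightarrow> A i \<in> sets NN"
    then have A': "A i \<in> sets borel" for i by simp
    have "emeasure (density (PiM (UNIV::'a set) (\<lambda>_. lborel)) (\<lambda>x. \<Prod>i\<in>UNIV. ennreal (std_normal_density (x i)))) (PiE UNIV A)
      = (\<integral>\<^sup>+x. (\<Prod>i\<in>UNIV. ennreal (std_normal_density (x i))) * indicator (PiE UNIV A) x \<partial>PiM UNIV (\<lambda>_. lborel))"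
      using A' by (subst emeasure_density) (auto intro!: sets_PiM_I_finite)
    also have "\<dots> = (\<integral>\<^sup>+x. (\<Prod>i\<in>UNIV. ennreal (std_normal_density (x i)) * indicator (A i) (x i)) \<partial>PiM UNIV (\<lambda>_. lborel))"
      by (intro nn_integral_cong) (auto simp: prod.distrib indicator_def space_PiM PiE_def extensional_def Pi_iff)
    also have "\<dots> = (\<Prod>i\<in>UNIV. (\<integral>\<^sup>+y. ennreal (std_normal_density y) * indicator (A i) y \<partial>lborel))"
      using A' by (subst PL.product_nn_integral_prod) auto
    also have "\<dots> = (\<Prod>i\<in>UNIV. emeasure NN (A i))"
      using A' by (intro prod.cong refl) (simp add: emeasure_density)
    finally show "emeasure (density (PiM (UNIV::'a set) (\<lambda>_. lborel)) (\<lambda>x. \<Prod>i\<in>UNIV. ennreal (std_normal_density (x i)))) (PiE UNIV A)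
      = (\<Prod>i\<in>UNIV. emeasure NN (A i))" .
  qed
qed

lemma std_gaussian_eq:
  "(std_gaussian :: (real^'a::finite) measure) = distr (PiM UNIV (\<lambda>_. NN)) borel (\<lambda>x. \<chi> i. x i)"
proof -
  have "std_gaussian = density (distr (PiM UNIV (\<lambda>_. lborel)) borel (\<lambda>x. \<chi> i. x i))
      (\<lambda>z::real^'a. ennreal (\<Prod>i\<in>UNIV. std_normal_density (z $ i)))"
    unfolding std_gaussian_def by (subst lborel_vec) (rule refl)
  also have "\<dots> = distr (density (PiM UNIV (\<lambda>_. lborel)) (\<lambda>x. ennreal (\<Prod>i\<in>UNIV. std_normal_density (x i)))) borel (\<lambda>x. \<chi> i. x i)"
    by (subst density_distr) (auto intro: measurable_vl)
  finally have e: "std_gaussian = distr (density (PiM UNIV (\<lambda>_. lborel)) (\<lambda>x. ennreal (\<Prod>i\<in>UNIV. std_normal_density (x i)))) borel (\<lambda>x::'a\<Rightarrow>real. \<chi> i. x i)" .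
  have e3: "(\<lambda>x::'a\<Rightarrow>real. ennreal (\<Prod>i\<in>UNIV. std_normal_density (x i))) = (\<lambda>x. \<Prod>i\<in>UNIV. ennreal (std_normal_density (x i)))"
    by (simp add: prod_ennreal)
  show ?thesis using e unfolding e3 density_PiM_NN .
qed


lemma prob_P: "prob_space (PiM (UNIV::'a::finite set) (\<lambda>_. NN))"
  by (rule prob_space_PiM) (rule prob_NN)

lemma coord_distributed:
  "distributed (PiM (UNIV::'a::finite set) (\<lambda>_. NN)) lborel (\<lambda>x. x i) (\<lambda>x. ennreal (std_normal_density x))"
proof -
  have "distr (PiM (UNIV::'a set) (\<lambda>_. NN)) lborel (\<lambda>x. x i) = distr (PiM (UNIV::'a set) (\<lambda>_. NN)) NN (\<lambda>x. x i)"
    by (rule distr_cong) auto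
  also have "\<dots> = NN" by (rule distr_PiM_component) (auto intro: prob_NN)
  moreover have "(\<lambda>x. x i) \<in> measurable (PiM (UNIV::'a set) (\<lambda>_. NN)) lborel"
  proof -
    have "(\<lambda>x. x i) \<in> measurable (PiM (UNIV::'a set) (\<lambda>_. NN)) NN"
      by (rule measurable_component_singleton) simp
    moreover have "sets NN = sets lborel" by simp
    ultimately show ?thesis using measurable_cong_sets[OF refl, of NN lborel "PiM (UNIV::'a set) (\<lambda>_. NN)"] by simp
  qed
  ultimately show ?thesis unfolding distributed_def by simp
qed

lemma coord_indep:
  "prob_space.indep_vars (PiM (UNIV::'a::finite set) (\<lambda>_. NN)) (\<lambda>_. borel) (\<lambda>i x. x i) UNIV"
proof -
  let ?P = "PiM (UNIV::'a set) (\<lambda>_. NN)"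
  interpret prob_space ?P by (rule prob_P)
  have rv: "random_variable borel (\<lambda>x. x i)" for i
    using distributed_measurable[OF coord_distributed[of i]] by simp
  have "distr ?P (PiM UNIV (\<lambda>_. borel)) (\<lambda>x. \<lambda>i\<in>UNIV. x i) = distr ?P (PiM UNIV (\<lambda>_. borel)) (\<lambda>x. x)"
    by (simp add: restrict_UNIV)
  also have "\<dots> = ?P" by (rule distr_id2) (rule sets_PiM_cong; simp)
  also have "\<dots> = PiM UNIV (\<lambda>i. distr ?P borel (\<lambda>x. x i))"
  proof (rule PiM_cong[OF refl])
    fix i :: 'a
    have "distr ?P borel (\<lambda>x. x i) = distr ?P NN (\<lambda>x. x i)" by (rule distr_cong) auto
    also have "\<dots> = NN" by (rule distr_PiM_component) (auto intro: prob_NN)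
    finally show "NN = distr ?P borel (\<lambda>x. x i)" by simp
  qed
  finally show ?thesis
    by (subst indep_vars_iff_distr_eq_PiM) (auto intro: rv)
qed

lemma gauss_lin:
  fixes w :: "real^'a::finite" and h :: "real \<Rightarrow> real"
  assumes w: "w \<noteq> 0" and hm[measurable]: "h \<in> borel_measurable borel"
    and hom: "\<And>c u. c \<ge> 0 \<Longrightarrow> h (c * u) = c * h u"
  shows "(\<integral>z. h (z \<bullet> w) \<partial>std_gaussian) = norm w * (\<integral>u. std_normal_density u * h u \<partial>lborel)"
proof -
  let ?P = "PiM (UNIV::'a set) (\<lambda>_. NN)"
  interpret prob_space ?P by (rule prob_P)
  define I where "I = {i. w$i \<noteq> 0}"
  define X where "X i x = w$i * x i" for i and x :: "'a \<Rightarrow> real"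
  define Y where "Y x = (\<Sum>i\<in>I. X i x)" for x
  have I: "I \<noteq> {}" using w by (auto simp: I_def vec_eq_iff)
  have mvl: "(\<lambda>x. \<chi> i. x i) \<in> borel_measurable ?P" by (rule measurable_vl) simp
  have "(\<integral>z. h (z \<bullet> w) \<partial>std_gaussian) = (\<integral>x. h ((\<chi> i. x i) \<bullet> w) \<partial>?P)"
    unfolding std_gaussian_eq by (subst integral_distr[OF mvl]) auto
  also have "(\<lambda>x. (\<chi> i. x i) \<bullet> w) = Y"
  proof
    fix x :: "'a \<Rightarrow> real"
    have "(\<chi> i. x i) \<bullet> w = (\<Sum>i\<in>UNIV. x i * w$i)" by (simp add: inner_vec_def)
    also have "\<dots> = (\<Sum>i\<in>I. x i * w$i)"
      by (rule sum.mono_neutral_right) (auto simp: I_def)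
    finally show "(\<chi> i. x i) \<bullet> w = Y x" by (simp add: Y_def X_def mult.commute)
  qed
  finally have e1: "(\<integral>z. h (z \<bullet> w) \<partial>std_gaussian) = (\<integral>x. h (Y x) \<partial>?P)" .
  have ind: "indep_vars (\<lambda>_. borel) X I"
    unfolding X_def
    by (rule indep_vars_compose2[OF indep_vars_subset[OF coord_indep]]) auto
  have dX: "distributed ?P lborel (X i) (normal_density 0 \<bar>w$i\<bar>)" if "i \<in> I" for i
    using normal_density_affine[OF coord_distributed[of i], of "w$i" 0] that
    by (simp add: X_def[abs_def] I_def)
  have dY: "distributed ?P lborel Y (normal_density 0 (sqrt (\<Sum>i\<in>I. \<bar>w$i\<bar>\<^sup>2)))"
    using sum_indep_normal[OF _ I ind, of "\<lambda>i. \<bar>w$i\<bar>" "\<lambda>_. 0"] dX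
    by (auto simp: Y_def[abs_def] I_def)
  have nw: "norm w = sqrt (\<Sum>i\<in>I. \<bar>w$i\<bar>\<^sup>2)"
  proof -
    have "norm w = sqrt (\<Sum>i\<in>UNIV. \<bar>w$i\<bar>\<^sup>2)" by (simp add: norm_vec_def L2_set_def)
    also have "(\<Sum>i\<in>UNIV. \<bar>w$i\<bar>\<^sup>2) = (\<Sum>i\<in>I. \<bar>w$i\<bar>\<^sup>2)"
      by (rule sum.mono_neutral_right) (auto simp: I_def)
    finally show ?thesis .
  qed
  have npos: "norm w > 0" using w by simp
  have dZ: "distributed ?P lborel (\<lambda>x. (Y x - 0) / norm w) std_normal_density"
    using normal_standard_normal_convert[OF npos, of Y 0] dY nw by simp
  have "(\<integral>u. std_normal_density u * h u \<partial>lborel) = (\<integral>x. h ((Y x - 0) / norm w) \<partial>?P)"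
    by (rule distributed_integral[OF dZ]) auto
  moreover have "(\<integral>x. h (Y x) \<partial>?P) = norm w * (\<integral>x. h ((Y x - 0) / norm w) \<partial>?P)"
  proof -
    have "h (Y x) = norm w * h ((Y x - 0) / norm w)" for x
      using hom[of "norm w" "(Y x - 0) / norm w"] npos by simp
    then show ?thesis by simp
  qed
  ultimately show ?thesis using e1 by simp
qed


lemma std_integrals:
  "(\<integral>u. std_normal_density u * u \<partial>lborel) = 0"
  "(\<integral>u. std_normal_density u * \<bar>u\<bar> \<partial>lborel) = sqrt (2/pi)"
  "integrable lborel (\<lambda>u. std_normal_density u * u)"
  "integrable lborel (\<lambda>u. std_normal_density u * \<bar>u\<bar>)"
  using integral_std_normal_moment_odd[of 0] integral_std_normal_moment_abs_odd[of 0]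
    integrable_std_normal_moment[of 1] integrable_std_normal_moment_abs[of 1]
  by simp_all

lemma sigma_form:
  assumes hom: "\<And>\<alpha> t. \<alpha> \<ge> 0 \<Longrightarrow> \<sigma> (\<alpha> * t) = \<alpha> * (\<sigma> t :: real)"
  shows "\<bar>\<sigma> u\<bar> = \<bar>\<sigma> 1\<bar> * ((u + \<bar>u\<bar>)/2) + \<bar>\<sigma> (-1)\<bar> * ((\<bar>u\<bar> - u)/2)"
proof (cases "u \<ge> 0")
  case True
  then have "\<sigma> u = u * \<sigma> 1" using hom[of u 1] by simp
  then show ?thesis using True by (simp add: abs_mult)
next
  case False
  then have "\<sigma> u = (-u) * \<sigma> (-1)" using hom[of "-u" "-1"] by simp
  then show ?thesis using False by (simp add: abs_mult)
qed

lemma arith_id: "(p::real) * (A * ((u + x) / 2) + B * ((x - u) / 2)) = (A - B) / 2 * (p * u) + (A + B) / 2 * (p * x)"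
  by (simp add: algebra_simps add_divide_distrib diff_divide_distrib)

lemma C_value:
  assumes hom: "\<And>\<alpha> t. \<alpha> \<ge> 0 \<Longrightarrow> \<sigma> (\<alpha> * t) = \<alpha> * (\<sigma> t :: real)"
  shows "(\<integral>u. std_normal_density u * \<bar>\<sigma> u\<bar> \<partial>lborel) = (\<bar>\<sigma> 1\<bar> + \<bar>\<sigma> (-1)\<bar>) / 2 * sqrt (2/pi)"
proof -
  let ?a = "\<bar>\<sigma> 1\<bar>" and ?b = "\<bar>\<sigma> (-1)\<bar>"
  have "(\<lambda>u. std_normal_density u * \<bar>\<sigma> u\<bar>) =
     (\<lambda>u. (?a - ?b)/2 * (std_normal_density u * u) + (?a + ?b)/2 * (std_normal_density u * \<bar>u\<bar>))"
  proof (rule ext)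
    fix u
    show "std_normal_density u * \<bar>\<sigma> u\<bar> = (?a - ?b)/2 * (std_normal_density u * u) + (?a + ?b)/2 * (std_normal_density u * \<bar>u\<bar>)"
    proof -
      have sf: "\<bar>\<sigma> u\<bar> = ?a * ((u + \<bar>u\<bar>)/2) + ?b * ((\<bar>u\<bar> - u)/2)" by (rule sigma_form[OF hom])
      show ?thesis unfolding sf by (rule arith_id)
    qed
  qed
  then have "(\<integral>u. std_normal_density u * \<bar>\<sigma> u\<bar> \<partial>lborel) =
     (\<integral>u. (?a - ?b)/2 * (std_normal_density u * u) + (?a + ?b)/2 * (std_normal_density u * \<bar>u\<bar>) \<partial>lborel)"
    by simp
  also have "\<dots> = (?a - ?b)/2 * (\<integral>u. std_normal_density u * u \<partial>lborel) + (?a + ?b)/2 * (\<integral>u. std_normal_density u * \<bar>u\<bar> \<partial>lborel)"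
  proof -
    have i1: "integrable lborel (\<lambda>u. (?a - ?b)/2 * (std_normal_density u * u))"
      by (rule integrable_mult_right) (rule std_integrals(3))
    have i2: "integrable lborel (\<lambda>u. (?a + ?b)/2 * (std_normal_density u * \<bar>u\<bar>))"
      by (rule integrable_mult_right) (rule std_integrals(4))
    show ?thesis by (simp only: Bochner_Integration.integral_add[OF i1 i2] integral_mult_right_zero)
  qed
  finally show ?thesis using std_integrals by simp
qed

lemma diag_le_frob: "\<bar>M $ j $ j\<bar> \<le> frob_norm (M :: real^'n^'n)"
proof -
  have "(M $ j $ j)\<^sup>2 \<le> (\<Sum>k\<in>UNIV. (M $ j $ k)\<^sup>2)"
    by (rule member_le_sum) auto
  also have "\<dots> \<le> (\<Sum>i\<in>UNIV. \<Sum>k\<in>UNIV. (M $ i $ k)\<^sup>2)"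
    by (rule member_le_sum[where f="\<lambda>i. \<Sum>k\<in>UNIV. (M $ i $ k)\<^sup>2"]) (auto intro: sum_nonneg)
  finally show ?thesis unfolding frob_norm_def
    by (metis real_sqrt_abs real_sqrt_le_mono)
qed

lemma gram_diag: "(transpose W ** W) $ j $ j = (norm (column j W))\<^sup>2"
  by (simp add: matrix_matrix_mult_def transpose_def column_def power2_norm_eq_inner inner_vec_def)


theorem theorem4:
  fixes W :: "real ^ 'b ^ 'a" and \<sigma> :: "real \<Rightarrow> real"
  assumes hom: "\<And>\<alpha> t. \<alpha> \<ge> 0 \<Longrightarrow> \<sigma> (\<alpha> * t) = \<alpha> * \<sigma> t"
    and nonzero: "\<exists>t. \<sigma> t \<noteq> 0"
    and eps: "sqrt (DfI W) < 1"
  shows "\<forall>j. sqrt ((1 - sqrt (DfI W)) / (1 + sqrt (DfI W))) \<le> activity_score \<sigma> W j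
           \<and> activity_score \<sigma> W j \<le> sqrt ((1 + sqrt (DfI W)) / (1 - sqrt (DfI W)))"
proof -
  define e where "e = sqrt (DfI W)"
  define M where "M = transpose W ** W - mat 1"
  define n where "n k = norm (column k W)" for k
  define a where "a = \<bar>\<sigma> 1\<bar>"
  define b where "b = \<bar>\<sigma> (-1)\<bar>"
  define C where "C = (a + b) / 2 * sqrt (2/pi)"
  have e_eq: "e = frob_norm M"
    unfolding e_def DfI_def M_def frob_norm_def by (simp add: sum_nonneg)
  have e0: "0 \<le> e" unfolding e_def DfI_def by simp
  have e1: "e < 1" using eps unfolding e_def .
  have nk: "\<bar>(n k)\<^sup>2 - 1\<bar> \<le> e" for k
  proof -
    have "M $ k $ k = (n k)\<^sup>2 - 1"
      unfolding M_def n_def by (simp add: gram_diag mat_def)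
    then show ?thesis using diag_le_frob[of M k] e_eq by simp
  qed
  have nlo: "sqrt (1 - e) \<le> n k" for k
  proof -
    have "1 - e \<le> (n k)\<^sup>2" using nk[of k] by linarith
    then have "sqrt (1 - e) \<le> sqrt ((n k)\<^sup>2)" by (rule real_sqrt_le_mono)
    then show ?thesis by (simp add: n_def)
  qed
  have nhi: "n k \<le> sqrt (1 + e)" for k
  proof -
    have "(n k)\<^sup>2 \<le> 1 + e" using nk[of k] by linarith
    then have "sqrt ((n k)\<^sup>2) \<le> sqrt (1 + e)" by (rule real_sqrt_le_mono)
    then show ?thesis by (simp add: n_def)
  qed
  have s1: "sqrt (1 - e) > 0" using e1 by simp
  have npos: "n k > 0" for k using nlo[of k] s1 by linarith
  have ab: "a + b > 0"
  proof -
    obtain t where t: "\<sigma> t \<noteq> 0" using nonzero by blast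
    have "\<bar>\<sigma> t\<bar> = a * ((t + \<bar>t\<bar>)/2) + b * ((\<bar>t\<bar> - t)/2)"
      unfolding a_def b_def by (rule sigma_form[OF hom])
    moreover have "a \<ge> 0" "b \<ge> 0" unfolding a_def b_def by simp_all
    ultimately show ?thesis using t
      by (smt (verit, best) mult_nonneg_nonneg mult_eq_0_iff abs_ge_zero)
  qed
  have Cpos: "C > 0" unfolding C_def using ab by simp
  have hm: "(\<lambda>u. \<bar>\<sigma> u\<bar>) \<in> borel_measurable borel"
  proof -
    have "(\<lambda>u. \<bar>\<sigma> u\<bar>) = (\<lambda>u. a * ((u + \<bar>u\<bar>)/2) + b * ((\<bar>u\<bar> - u)/2))"
      unfolding a_def b_def by (rule ext) (rule sigma_form[OF hom])
    then show ?thesis by simp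
  qed
  have hh: "\<bar>\<sigma> (c * u)\<bar> = c * \<bar>\<sigma> u\<bar>" if "c \<ge> 0" for c u
    using hom[OF that, of u] that by (simp add: abs_mult)
  have act: "exp_act \<sigma> W k = n k * C" for k
  proof -
    have "column k W \<noteq> 0" using npos[of k] by (auto simp: n_def)
    then have "exp_act \<sigma> W k = n k * (\<integral>u. std_normal_density u * \<bar>\<sigma> u\<bar> \<partial>lborel)"
      unfolding exp_act_def n_def by (rule gauss_lin[where h="\<lambda>u. \<bar>\<sigma> u\<bar>", OF _ hm hh])
    then show ?thesis using C_value[OF hom] by (simp add: C_def a_def b_def)
  qed
  define B where "B = real CARD('b)"
  have B0: "B > 0" unfolding B_def by simp
  define avg where "avg = (1 / B) * (\<Sum>k\<in>UNIV. n k)"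
  have avg_lo: "sqrt (1 - e) \<le> avg"
  proof -
    have "(\<Sum>k\<in>(UNIV::'b set). sqrt (1 - e)) \<le> (\<Sum>k\<in>UNIV. n k)" by (rule sum_mono) (rule nlo)
    then have "B * sqrt (1 - e) \<le> (\<Sum>k\<in>UNIV. n k)" by (simp add: B_def)
    then show ?thesis unfolding avg_def using B0 by (simp add: field_simps)
  qed
  have avg_hi: "avg \<le> sqrt (1 + e)"
  proof -
    have "(\<Sum>k\<in>UNIV. n k) \<le> (\<Sum>k\<in>(UNIV::'b set). sqrt (1 + e))" by (rule sum_mono) (rule nhi)
    then have "(\<Sum>k\<in>UNIV. n k) \<le> B * sqrt (1 + e)" by (simp add: B_def)
    then show ?thesis unfolding avg_def using B0 by (simp add: field_simps)
  qed
  have score: "activity_score \<sigma> W j = n j / avg" for j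
  proof -
    have "activity_score \<sigma> W j = (n j * C) / ((1 / B) * (\<Sum>k\<in>UNIV. n k * C))"
      unfolding activity_score_def act B_def by simp
    also have "(\<Sum>k\<in>UNIV. n k * C) = (\<Sum>k\<in>UNIV. n k) * C" by (simp add: sum_distrib_right)
    finally show ?thesis unfolding avg_def using Cpos by simp
  qed
  show ?thesis
  proof (intro allI conjI)
    fix j
    have "sqrt ((1 - e) / (1 + e)) = sqrt (1 - e) / sqrt (1 + e)" by (simp add: real_sqrt_divide)
    also have "\<dots> \<le> n j / avg"
      apply (rule frac_le) using nlo[of j] s1 avg_lo avg_hi npos[of j] by linarith+
    finally show "sqrt ((1 - sqrt (DfI W)) / (1 + sqrt (DfI W))) \<le> activity_score \<sigma> W j"
      unfolding score e_def .
    have "n j / avg \<le> sqrt (1 + e) / sqrt (1 - e)"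
      apply (rule frac_le) using nhi[of j] s1 avg_lo npos[of j] by linarith+
    also have "\<dots> = sqrt ((1 + e) / (1 - e))" by (simp add: real_sqrt_divide)
    finally show "activity_score \<sigma> W j \<le> sqrt ((1 + sqrt (DfI W)) / (1 - sqrt (DfI W)))"
      unfolding score e_def .
  qed
qed

end
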